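(* Let $n$ be a nonzero integer and let $q(t)=n(t+t^{-1})+1-2n$. Then there exist a prime $p$ and integers $m,\ell$ coprime to $p$, such that if $p$ is odd then $p$ is coprime to $1-4m$ and $1-4m$ is a quadratic nonresidue modulo $p$, and such that $q(t)\in S_{p,m,\ell}$, if and only if $1-4n$ is not a perfect square.
   Context: For a prime $p$ and integers $m,\ell$, define the set of Laurent polynomials $$S_{p,m,\ell}=\{m(t+t^{-1})+1-2m\}\cup\{(m+\ell p^{2s+1})(t+t^{-1})+1-2(m+\ell p^{2s+1}) : s\in\mathbb{Z},\ s\geq 0\}.$$ An integer $x$ is a quadratic nonresidue modulo $p$ if $x\not\equiv y^2 \pmod p$ for all integers $y$. A perfect square means $k^2$ for some integer $k$ (so negative integers are not perfect squares). *)

theory Defs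
  imports "HOL-Computational_Algebra.Formal_Laurent_Series" "HOL-Number_Theory.Number_Theory"
begin

definition lpoly :: "int \<Rightarrow> int fls" where
  "lpoly c = fls_const c * (fls_X + fls_X_inv) + fls_const (1 - 2 * c)"

definition S_set :: "nat \<Rightarrow> int \<Rightarrow> int \<Rightarrow> int fls set" where
  "S_set p m l = {lpoly m} \<union> {lpoly (m + l * int p ^ (2 * s + 1)) | s :: nat. True}"

end

theory Submission
  imports Defs
begin


lemma euler_int:
  fixes p :: int assumes "prime p" "p > 2"
  shows "[Legendre a p = a ^ nat ((p-1) div 2)] (mod p)"
proof -
  have p: "p = int (nat p)" using assms by simp
  have "prime (nat p)" using assms p by (metis prime_int_nat_transfer)
  moreover have "2 < nat p" using assms by simp
  ultimately have "[Legendre a (int (nat p)) = a ^ ((nat p - 1) div 2)] (mod int (nat p))"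
    by (rule euler_criterion)
  moreover have "(nat p - 1) div 2 = nat ((p-1) div 2)" using assms by (simp add: nat_div_distrib nat_diff_distrib)
  ultimately show ?thesis using p by simp
qed

lemma leg_vals: "Legendre a p \<in> {-1,0,1}"
  by (simp add: Legendre_def)

lemma small_cong_eq:
  fixes p x y :: int assumes "p > 2" "x \<in> {-1,0,1}" "y \<in> {-1,0,1}" "[x = y] (mod p)"
  shows "x = y"
proof -
  have "p dvd (x - y)" using assms(4) by (simp add: cong_iff_dvd_diff)
  moreover have "\<bar>x - y\<bar> < p" using assms(1-3) by auto
  ultimately show ?thesis
  proof (cases "x = y")
    case False
    then have "x - y \<noteq> 0" by simp
    then have "\<bar>p\<bar> \<le> \<bar>x - y\<bar>" using \<open>p dvd (x - y)\<close> by (rule dvd_imp_le_int)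
    then show ?thesis using \<open>\<bar>x - y\<bar> < p\<close> by simp
  qed
qed

lemma leg_mult:
  fixes p :: int assumes "prime p" "p > 2"
  shows "Legendre (a*b) p = Legendre a p * Legendre b p"
proof -
  let ?k = "nat ((p-1) div 2)"
  have "[Legendre (a*b) p = (a*b) ^ ?k] (mod p)" by (rule euler_int[OF assms])
  moreover have "[a ^ ?k * b ^ ?k = Legendre a p * Legendre b p] (mod p)"
    using euler_int[OF assms, of a] euler_int[OF assms, of b] by (metis cong_mult cong_sym)
  ultimately have "[Legendre (a*b) p = Legendre a p * Legendre b p] (mod p)"
    by (metis cong_trans power_mult_distrib)
  moreover have "Legendre a p * Legendre b p \<in> {-1,0,1}" using leg_vals[of a p] leg_vals[of b p] by auto
  ultimately show ?thesis using small_cong_eq assms(2) leg_vals by blast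
qed

lemma half_even: "odd (p::int) \<Longrightarrow> even ((p-1) div 2) \<longleftrightarrow> p mod 4 = 1"
  by presburger

lemma odd_mod4: "odd (p::int) \<Longrightarrow> p mod 4 = 1 \<or> p mod 4 = 3"
  by presburger

lemma leg_neg1:
  fixes p :: int assumes "prime p" "p > 2"
  shows "Legendre (-1) p = (if p mod 4 = 1 then 1 else -1)"
proof -
  have c: "[Legendre (-1) p = (-1) ^ nat ((p-1) div 2)] (mod p)" by (rule euler_int[OF assms])
  have "odd p" using assms by (metis prime_odd_int)
  then have "even (nat ((p-1) div 2)) \<longleftrightarrow> p mod 4 = 1" using assms
    using half_even[of p] by (simp add: even_nat_iff)
  then have "((-1::int) ^ nat ((p-1) div 2)) = (if p mod 4 = 1 then 1 else -1)" by auto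
  with c have "[Legendre (-1) p = (if p mod 4 = 1 then 1 else -1)] (mod p)" by simp
  moreover have "(if p mod 4 = 1 then 1 else -1::int) \<in> {-1,0,1}" by simp
  ultimately show ?thesis using small_cong_eq[OF assms(2) leg_vals[of "-1" p]] by blast
qed

lemma leg_cong:
  assumes "[a = b] (mod p)" shows "Legendre a p = Legendre b p"
proof -
  have "[a = 0] (mod p) \<longleftrightarrow> [b = 0] (mod p)" using assms by (simp add: cong_def)
  moreover have "QuadRes p a \<longleftrightarrow> QuadRes p b"
  proof
    assume "QuadRes p a" then obtain y where "[y^2 = a] (mod p)" unfolding QuadRes_def by blast
    then have "[y^2 = b] (mod p)" using assms by (rule cong_trans)
    then show "QuadRes p b" unfolding QuadRes_def by blast
  next
    assume "QuadRes p b" then obtain y where "[y^2 = b] (mod p)" unfolding QuadRes_def by blast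
    then have "[y^2 = a] (mod p)" using cong_sym[OF assms] by (rule cong_trans)
    then show "QuadRes p a" unfolding QuadRes_def by blast
  qed
  ultimately show ?thesis unfolding Legendre_def by simp
qed

lemma leg_1:
  fixes p :: int assumes "p > 1" shows "Legendre 1 p = 1"
proof -
  have "\<not> [1 = 0] (mod p)" using assms by (simp add: cong_def)
  moreover have "QuadRes p 1" unfolding QuadRes_def by (rule exI[of _ 1]) simp
  ultimately show ?thesis unfolding Legendre_def by simp
qed

lemma leg_recip:
  fixes p q :: int assumes "prime p" "p > 2" "prime q" "q > 2" "p \<noteq> q"
  shows "Legendre p q * Legendre q p = (if p mod 4 = 3 \<and> q mod 4 = 3 then -1 else 1)"
proof -
  have "prime (nat p)" "prime (nat q)" using assms by (metis prime_int_nat_transfer int_nat_eq)+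
  then have r: "Legendre p q * Legendre q p = (-1::int) ^ (nat ((p - 1) div 2 * ((q - 1) div 2)))"
    using assms Quadratic_Reciprocity_int by blast
  have "odd p" "odd q" using assms by (metis prime_odd_int)+
  then have "even (nat ((p - 1) div 2 * ((q - 1) div 2))) \<longleftrightarrow> \<not> (p mod 4 = 3 \<and> q mod 4 = 3)"
    using assms half_even[of p] half_even[of q] odd_mod4[of p] odd_mod4[of q] by (auto simp add: even_nat_iff)
  then show ?thesis using r by auto
qed



lemma exists_nonres:
  fixes q :: int assumes "prime q" "q > 2"
  shows "\<exists>r. Legendre r q = -1"
proof (rule ccontr)
  assume "\<not> ?thesis"
  then have all: "\<And>r. Legendre r q \<noteq> -1" by blast
  let ?h = "(q-1) div 2"
  have sub: "{1..q-1} \<subseteq> (\<lambda>y. y^2 mod q) ` {1..?h}"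
  proof
    fix r assume r: "r \<in> {1..q-1}"
    then have nz: "\<not> [r = 0] (mod q)" by (simp add: cong_def)
    then have "QuadRes q r" using all[of r] unfolding Legendre_def by (auto split: if_splits)
    then obtain y where y: "[y^2 = r] (mod q)" unfolding QuadRes_def by blast
    define z where "z = y mod q"
    have z: "0 \<le> z" "z < q" using assms z_def by auto
    have zc: "[z^2 = r] (mod q)" using y unfolding z_def by (metis cong_def power_mod)
    have rq: "r mod q = r" using r by simp
    have "z \<noteq> 0" using zc nz by (auto simp: cong_def)
    show "r \<in> (\<lambda>y. y^2 mod q) ` {1..?h}"
    proof (cases "z \<le> ?h")
      case True
      then show ?thesis using zc rq \<open>z \<noteq> 0\<close> z by (auto simp: cong_def intro!: image_eqI[of _ _ z])
    next
      case False
      have "[(q - z)^2 = z^2] (mod q)"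
      proof -
        have "(q - z)^2 = z^2 + q * (q - 2*z)" by (simp add: power2_eq_square algebra_simps)
        then show ?thesis by (simp add: cong_def)
      qed
      then have "[(q - z)^2 = r] (mod q)" using zc by (rule cong_trans)
      have oq: "odd q" using assms by (rule prime_odd_int)
      have "q - z \<le> ?h" using False oq by presburger
      moreover have "1 \<le> q - z" using z by simp
      ultimately have "q - z \<in> {1..?h}" by simp
      moreover note \<open>[(q - z)^2 = r] (mod q)\<close>
      ultimately show ?thesis using rq by (auto simp: cong_def intro!: image_eqI[of _ _ "q - z"])
    qed
  qed
  have "card {1..q-1} \<le> card ((\<lambda>y. y^2 mod q) ` {1..?h})" using sub by (intro card_mono) auto
  also have "\<dots> \<le> card {1..?h}" by (rule card_image_le) simp
  finally have "nat (q - 1) \<le> nat ?h" by simp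
  then show False using assms by linarith
qed

definition LP :: "int \<Rightarrow> int multiset \<Rightarrow> int" where
  "LP x M = prod_mset (image_mset (\<lambda>p. Legendre x p) M)"

lemma LP_empty[simp]: "LP x {#} = 1" by (simp add: LP_def)
lemma LP_add[simp]: "LP x (add_mset p M) = Legendre x p * LP x M" by (simp add: LP_def)

lemma all_odd: "\<forall>p\<in>#M. prime p \<and> p > 2 \<Longrightarrow> \<forall>p\<in>#M. odd (p::int)"
  using prime_odd_int by blast

lemma LP_one: "\<forall>p\<in>#M. prime p \<and> p > 2 \<Longrightarrow> LP 1 M = 1"
  by (induction M) (auto simp: leg_1)

lemma LP_mult:
  assumes "\<forall>p\<in>#M. prime p \<and> p > 2"
  shows "LP (x*y) M = LP x M * LP y M"
  using assms by (induction M) (auto simp: leg_mult)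

lemma odd_prod: "\<forall>p\<in>#M. odd (p::int) \<Longrightarrow> odd (prod_mset M)"
  by (induction M) auto

lemma mod4_mult:
  fixes x y :: int assumes "odd x" "odd y"
  shows "(x*y) mod 4 = 1 \<longleftrightarrow> (x mod 4 = 1 \<longleftrightarrow> y mod 4 = 1)"
proof -
  have e: "(x*y) mod 4 = ((x mod 4) * (y mod 4)) mod 4" by (simp add: mod_mult_eq)
  from odd_mod4[OF assms(1)] odd_mod4[OF assms(2)] show ?thesis
    by (auto simp: e)
qed

lemma s_mult:
  fixes p P q :: int assumes "odd p" "odd P" "odd q"
  shows "(if q mod 4 = 3 \<and> (p * P) mod 4 = 3 then -1 else 1::int) =
     (if p mod 4 = 3 \<and> q mod 4 = 3 then -1 else 1) * (if q mod 4 = 3 \<and> P mod 4 = 3 then -1 else 1)"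
proof -
  have e: "(p*P) mod 4 = ((p mod 4) * (P mod 4)) mod 4" by (simp add: mod_mult_eq)
  from odd_mod4[OF assms(1)] odd_mod4[OF assms(2)] odd_mod4[OF assms(3)] show ?thesis
    by (auto simp: e)
qed

lemma LP_neg1:
  assumes "\<forall>p\<in>#M. prime p \<and> p > 2"
  shows "LP (-1) M = (if prod_mset M mod 4 = 1 then 1 else -1)"
  using assms
proof (induction M)
  case empty then show ?case by simp
next
  case (add p M)
  have op: "odd p" using add.prems by (metis prime_odd_int union_single_eq_member)
  have oM: "odd (prod_mset M)" using add.prems by (intro odd_prod all_odd) auto
  show ?case using add op oM mod4_mult[OF op oM] by (auto simp: leg_neg1)
qed

lemma LP_recip:
  assumes "\<forall>p\<in>#M. prime p \<and> p > 2" "prime q" "q > 2" "q \<notin># M"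
  shows "LP q M = Legendre (prod_mset M) q * (if q mod 4 = 3 \<and> prod_mset M mod 4 = 3 then -1 else 1)"
  using assms
proof (induction M)
  case empty then show ?case using leg_1[of q] by simp
next
  case (add p M)
  have p: "prime p" "p > 2" "p \<noteq> q" using add.prems by auto
  have op: "odd p" using p by (metis prime_odd_int)
  have oq: "odd q" using add.prems by (metis prime_odd_int)
  have oM: "odd (prod_mset M)" using add.prems by (intro odd_prod all_odd) auto
  have IH: "LP q M = Legendre (prod_mset M) q * (if q mod 4 = 3 \<and> prod_mset M mod 4 = 3 then -1 else 1)"
    using add by auto
  have ndvd: "\<not> q dvd p"
  proof
    assume "q dvd p"
    then have "q = p" using primes_dvd_imp_eq[of q p] p add.prems by blast
    then show False using p by simp
  qed
  have "Legendre p q \<noteq> 0" using ndvd by (auto simp: Legendre_def cong_0_iff)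
  then have lpq: "Legendre p q = 1 \<or> Legendre p q = -1" using leg_vals[of p q] by auto
  have rec: "Legendre p q * Legendre q p = (if p mod 4 = 3 \<and> q mod 4 = 3 then -1 else 1)"
    using leg_recip p add.prems by auto
  have m: "Legendre (p * prod_mset M) q = Legendre p q * Legendre (prod_mset M) q"
    using leg_mult add.prems by auto
  have lqp: "Legendre q p = Legendre p q * (if p mod 4 = 3 \<and> q mod 4 = 3 then -1 else 1)"
  proof -
    have "Legendre p q * Legendre p q = 1" using lpq by auto
    then have "Legendre q p = Legendre p q * (Legendre p q * Legendre q p)" by (simp add: mult.assoc[symmetric])
    then show ?thesis using rec by simp
  qed
  have sm: "(if q mod 4 = 3 \<and> (p * prod_mset M) mod 4 = 3 then -1 else 1::int) =
     (if p mod 4 = 3 \<and> q mod 4 = 3 then -1 else 1) * (if q mod 4 = 3 \<and> prod_mset M mod 4 = 3 then -1 else 1)"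
    by (rule s_mult[OF op oM oq])
  have "LP q (add_mset p M) = Legendre q p * LP q M" by simp
  also have "\<dots> = (Legendre p q * Legendre (prod_mset M) q) *
     ((if p mod 4 = 3 \<and> q mod 4 = 3 then -1 else 1) * (if q mod 4 = 3 \<and> prod_mset M mod 4 = 3 then -1 else 1))"
    unfolding lqp IH by (simp only: mult_ac)
  also have "\<dots> = Legendre (prod_mset (add_mset p M)) q *
     (if q mod 4 = 3 \<and> prod_mset (add_mset p M) mod 4 = 3 then -1 else 1)"
    unfolding sm[symmetric] m[symmetric] by simp
  finally show ?case .
qed

lemma LP_prod:
  assumes "\<forall>q\<in>#Q. prime q \<and> q > 2" "\<forall>p\<in>#P. prime p \<and> p > 2" "\<forall>q\<in>#Q. q \<notin># P"
    "prod_mset P mod 4 = 1"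
  shows "LP (prod_mset Q) P = prod_mset (image_mset (\<lambda>q. Legendre (prod_mset P) q) Q)"
  using assms
proof (induction Q)
  case empty
  have "LP 1 P = 1" using empty LP_one by blast
  then show ?case by simp
next
  case (add q Q)
  have "LP (q * prod_mset Q) P = LP q P * LP (prod_mset Q) P" using add.prems LP_mult by blast
  moreover have "LP q P = Legendre (prod_mset P) q" using LP_recip[of P q] add.prems by auto
  ultimately show ?case using add by auto
qed

lemma prod_01:
  assumes "\<forall>x\<in>#M. f x \<in> {0,1::int}" shows "prod_mset (image_mset f M) \<in> {0,1}"
  using assms by (induction M) auto

lemma prod_single:
  assumes "\<forall>x\<in>#M. x \<noteq> q \<longrightarrow> f x = (1::int)"
  shows "prod_mset (image_mset f M) = f q ^ count M q"
  using assms by (induction M) auto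



lemma prod_pos: "\<forall>x\<in>#M. x > (0::int) \<Longrightarrow> prod_mset M > 0"
  by (induction M) auto

lemma sq_mod4: "(k::int)^2 mod 4 = 0 \<or> k^2 mod 4 = 1"
proof (cases "even k")
  case True then obtain j where "k = 2*j" by blast
  then have "k^2 = 4*(j*j)" by (simp add: power2_eq_square)
  then show ?thesis by simp
next
  case False then obtain j where "k = 2*j+1" using oddE by blast
  define t where "t = j*j+j"
  then have "k^2 = 4*t + 1" using \<open>k = 2*j+1\<close> by (simp add: power2_eq_square algebra_simps)
  moreover have "\<forall>u::int. u = 4*t+1 \<longrightarrow> u mod 4 = 1" by presburger
  ultimately show ?thesis by simp
qed

lemma main_nonres:
  fixes D :: int assumes D4: "D mod 4 = 1" and nsqD: "\<not>(\<exists>k. D = k^2)"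
  shows "\<exists>p. prime p \<and> p > 2 \<and> Legendre D p = -1"
proof -
  define a where "a = \<bar>D\<bar>"
  have Da: "D = a \<or> D = -1 * a" unfolding a_def by auto
  have "D \<noteq> 0" using D4 by auto
  then have apos: "a > 0" unfolding a_def by simp
  have oD: "odd D" using D4 by presburger
  have oa: "odd a" using Da oD by auto
  have nsq: "\<not>(\<exists>k. a = k^2)"
  proof
    assume "\<exists>k. a = k^2"
    then obtain k where k: "a = k^2" by blast
    show False
    proof (cases "D = a")
      case True then show ?thesis using nsqD k by blast
    next
      case False
      then have "D = - (k^2)" using Da k by simp
      moreover obtain t where t: "t = k^2" by blast
      ultimately have "D = -t" by simp
      moreover have "t mod 4 = 0 \<or> t mod 4 = 1" using sq_mod4 t by simp
      ultimately show False using D4 by presburger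
    qed
  qed
  define Q where "Q = prime_factorization a"
  have Qa: "prod_mset Q = a" unfolding Q_def using prod_mset_prime_factorization_int apos by blast
  have Qpr: "\<forall>q\<in>#Q. prime q \<and> q > 2"
  proof
    fix q assume q: "q \<in># Q"
    then have pq: "prime q" unfolding Q_def by auto
    have "q dvd a" using q unfolding Q_def by auto
    then have "odd q" using oa by (meson dvd_trans)
    moreover have "q \<ge> 2" using pq by (rule prime_ge_2_int)
    ultimately have "q > 2" by presburger
    then show "prime q \<and> q > 2" using pq by simp
  qed
  obtain q where q: "q \<in># Q" "odd (count Q q)"
  proof (rule ccontr)
    assume "\<not> thesis"
    then have ev: "\<forall>x\<in>#Q. even (count Q x)" using that by blast
    have "a = (\<Prod>x\<in>set_mset Q. x ^ count Q x)" using Qa by (simp add: prod_mset_multiplicity)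
    also have "\<dots> = (\<Prod>x\<in>set_mset Q. (x ^ (count Q x div 2))^2)"
    proof (rule prod.cong)
      fix x assume "x \<in> set_mset Q"
      then have "count Q x = (count Q x div 2) * 2" using ev by auto
      then show "x ^ count Q x = (x ^ (count Q x div 2))^2" by (metis power_mult)
    qed simp
    also have "\<dots> = (\<Prod>x\<in>set_mset Q. x ^ (count Q x div 2))^2" by (simp add: prod_power_distrib)
    finally show False using nsq by blast
  qed
  have qpr: "prime q" "q > 2" using q Qpr by auto
  obtain r where r: "Legendre r q = -1" using exists_nonres qpr by blast
  define Q' where "Q' = filter_mset (\<lambda>x. x \<noteq> q) Q"
  define c where "c = prod_mset Q'"
  have cpos: "c > 0" unfolding c_def Q'_def using Qpr by (intro prod_pos) auto
  have nqc: "\<not> q dvd c"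
  proof
    assume "q dvd c"
    then obtain x where x: "x \<in># Q'" "q dvd x" using prime_dvd_prod_mset_iff[OF qpr(1)] unfolding c_def by blast
    have "prime x" "x \<noteq> q" using x(1) Qpr unfolding Q'_def by auto
    then show False using primes_dvd_imp_eq[OF qpr(1) \<open>prime x\<close> x(2)] by simp
  qed
  have nq4: "\<not> q dvd 4"
  proof
    assume "q dvd 4"
    then have "q dvd 2 * 2" by simp
    then have "q dvd 2" using prime_dvd_mult_iff[OF qpr(1)] by blast
    then have "q \<le> 2" using zdvd_imp_le[of q 2] by simp
    then show False using qpr by simp
  qed
  have "\<not> q dvd 4 * c" using nqc nq4 prime_dvd_mult_iff[OF qpr(1)] by blast
  then have "coprime q (4 * c)" using prime_imp_coprime[OF qpr(1)] by blast
  then have cop: "coprime (4 * c) q" by (simp add: coprime_commute)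
  obtain b0 where b0: "[b0 = 1] (mod (4*c))" "[b0 = r] (mod q)"
    using binary_chinese_remainder_int[OF cop] by blast
  define b where "b = b0 mod (4*c*q)"
  have bc: "[b = b0] (mod (4*c*q))" unfolding b_def cong_def by simp
  have b1: "[b = 1] (mod (4*c))" using cong_trans[OF cong_dvd_modulus[OF bc] b0(1)] by simp
  have br: "[b = r] (mod q)" using cong_trans[OF cong_dvd_modulus[OF bc] b0(2)] by simp
  have "[b = 1] (mod 4)" using cong_dvd_modulus[OF b1] by simp
  then have b4: "b mod 4 = 1" by (simp add: cong_def)
  have "4*c*q > 0" using cpos qpr by simp
  then have "b \<ge> 0" unfolding b_def by (rule pos_mod_sign)
  then have bpos: "b > 0" using b4 by (cases "b = 0") auto
  have Lbq: "Legendre b q = -1" using leg_cong[OF br] r by simp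
  have Lbx: "\<forall>x\<in>#Q. x \<noteq> q \<longrightarrow> Legendre b x = 1"
  proof (intro ballI impI)
    fix x assume x: "x \<in># Q" "x \<noteq> q"
    then have "x \<in># Q'" unfolding Q'_def by simp
    then have "x dvd c" unfolding c_def by (rule dvd_prod_mset)
    then have "x dvd 4 * c" by simp
    then have "[b = 1] (mod x)" using cong_dvd_modulus[OF b1] by blast
    then have "Legendre b x = Legendre 1 x" by (rule leg_cong)
    also have "\<dots> = 1" using Qpr x by (intro leg_1) auto
    finally show "Legendre b x = 1" .
  qed
  have prodQ: "prod_mset (image_mset (\<lambda>x. Legendre b x) Q) = -1"
  proof -
    have "prod_mset (image_mset (\<lambda>x. Legendre b x) Q) = Legendre b q ^ count Q q"
      using Lbx by (rule prod_single)
    also have "\<dots> = -1" using Lbq q(2) by simp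
    finally show ?thesis .
  qed
  define P where "P = prime_factorization b"
  have Pb: "prod_mset P = b" unfolding P_def using prod_mset_prime_factorization_int bpos by blast
  have ob: "odd b" using b4 by presburger
  have Ppr: "\<forall>p\<in>#P. prime p \<and> p > 2"
  proof
    fix p assume p: "p \<in># P"
    then have pp: "prime p" unfolding P_def by auto
    have "p dvd b" using p unfolding P_def by auto
    then have "odd p" using ob by (meson dvd_trans)
    moreover have "p \<ge> 2" using pp by (rule prime_ge_2_int)
    ultimately have "p > 2" by presburger
    then show "prime p \<and> p > 2" using pp by simp
  qed
  have disj: "\<forall>x\<in>#Q. x \<notin># P"
  proof (intro ballI notI)
    fix x assume x: "x \<in># Q" "x \<in># P"
    then have "x dvd b" unfolding P_def by auto
    then have "Legendre b x = 0" by (simp add: Legendre_def cong_0_iff)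
    moreover have "Legendre b x \<noteq> 0" using Lbx Lbq x(1) by (cases "x = q") auto
    ultimately show False by simp
  qed
  have LPa: "LP a P = -1"
  proof -
    have "LP (prod_mset Q) P = prod_mset (image_mset (\<lambda>x. Legendre (prod_mset P) x) Q)"
      using LP_prod[OF Qpr Ppr disj] Pb b4 by simp
    then show ?thesis using Qa Pb prodQ by simp
  qed
  have LPD: "LP D P = -1"
  proof (cases "D = a")
    case True then show ?thesis using LPa by simp
  next
    case False
    then have "D = -1 * a" using Da by simp
    then have e: "LP D P = LP (-1) P * LP a P" using LP_mult[OF Ppr, of "-1" a] by simp
    have "LP (-1) P = 1" using LP_neg1[OF Ppr] Pb b4 by simp
    then show ?thesis using e LPa by simp
  qed
  show ?thesis
  proof (rule ccontr)
    assume nt: "\<not> (\<exists>p. prime p \<and> p > 2 \<and> Legendre D p = -1)"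
    have "\<forall>p\<in>#P. Legendre D p \<in> {0,1}"
    proof
      fix p assume "p \<in># P"
      have "Legendre D p \<in> {-1,0,1}" by (rule leg_vals)
      moreover have "Legendre D p \<noteq> -1" using nt \<open>p \<in># P\<close> Ppr by blast
      ultimately show "Legendre D p \<in> {0,1}" by blast
    qed
    then have "LP D P \<in> {0,1}" unfolding LP_def by (rule prod_01)
    then show False using LPD by simp
  qed
qed

lemma S_mem: "x \<in> S_set p m l \<Longrightarrow> x = lpoly m \<or> (\<exists>s::nat. x = lpoly (m + l * int p ^ (2 * s + 1)))"
  unfolding S_set_def by blast

lemma lpoly_nth1: "fls_nth (lpoly c) 1 = c"
  unfolding lpoly_def fls_plus_nth fls_mult_const_nth fls_X_nth fls_X_inv_nth fls_const_nth by simp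

lemma lpoly_inj: assumes "lpoly x = lpoly y" shows "x = y"
proof -
  have "fls_nth (lpoly x) 1 = fls_nth (lpoly y) 1" using assms by simp
  then show ?thesis unfolding lpoly_nth1 .
qed

lemma fwd_cong:
  assumes "lpoly n \<in> S_set p m l" shows "[n = m] (mod int p)"
proof -
  have "lpoly n = lpoly m \<or> (\<exists>s::nat. lpoly n = lpoly (m + l * int p ^ (2 * s + 1)))"
    using S_mem[OF assms] .
  then have "n = m \<or> (\<exists>s::nat. n = m + l * int p ^ (2 * s + 1))" by (auto dest: lpoly_inj)
  then show ?thesis
  proof (elim disjE exE)
    assume "n = m" then show ?thesis by (simp add: cong_refl)
  next
    fix s :: nat assume s: "n = m + l * int p ^ (2 * s + 1)"
    have d: "int p dvd l * int p ^ (2 * s + 1)" by simp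
    have "n - m = l * int p ^ (2 * s + 1)" using s by simp
    then have "int p dvd n - m" using d by simp
    then show ?thesis by (simp only: cong_iff_dvd_diff)
  qed
qed

lemma fwd_two:
  fixes n m k :: int
  assumes "[n = m] (mod 2)" "odd m" "1 - 4 * n = k ^ 2" shows False
proof -
  have "n mod 2 = m mod 2" using assms(1) by (simp add: cong_def)
  then have on: "odd n" using assms(2) by presburger
  have "odd (1 - 4*n)" by presburger
  then have "odd (k^2)" using assms(3) by simp
  then have "odd k" by simp
  then obtain j where j: "k = 2*j+1" using oddE by blast
  define t where "t = j*j+j"
  have "k^2 = 4*t + 1" unfolding t_def j by (simp add: power2_eq_square algebra_simps)
  then have nt: "n = -t" using assms(3) by simp
  have "t = j*(j+1)" unfolding t_def by (simp add: algebra_simps)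
  then have "even t" by simp
  then show False using on nt by simp
qed

lemma fwd_odd:
  fixes n m k :: int
  assumes "[n = m] (mod q)" "1 - 4 * n = k ^ 2" shows "QuadRes q (1 - 4 * m)"
proof -
  have "[1 - 4 * n = 1 - 4 * m] (mod q)" using assms(1) by (intro cong_diff cong_mult cong_refl)
  then have "[k^2 = 1 - 4 * m] (mod q)" using assms(2) by simp
  then show ?thesis unfolding QuadRes_def by blast
qed

lemma bwd:
  fixes n :: int
  assumes ns: "\<not> (\<exists>k::int. 1 - 4 * n = k ^ 2)"
  shows "\<exists>(p::nat) (m::int) (l::int). prime p \<and> coprime m (int p) \<and> coprime l (int p) \<and>
            (odd p \<longrightarrow> coprime (int p) (1 - 4 * m) \<and> \<not> QuadRes (int p) (1 - 4 * m)) \<and>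
            lpoly n \<in> S_set p m l"
proof -
  have "(1 - 4*n) mod 4 = 1" by presburger
  then obtain q where q: "prime q" "q > 2" "Legendre (1 - 4*n) q = -1" using main_nonres[OF _ ns] by blast
  define p where "p = nat q"
  have qp: "int p = q" unfolding p_def using q by simp
  have "prime (int p)" using q(1) qp by simp
  then have pp: "prime p" by (simp add: prime_int_nat_transfer)
  have nd: "\<not> q dvd (1 - 4*n)" using q(3) by (auto simp: Legendre_def cong_0_iff)
  have "\<not> q dvd n"
  proof
    assume "q dvd n"
    then have "[1 - 4*n = 1] (mod q)" by (simp add: cong_iff_dvd_diff)
    then have "Legendre (1 - 4*n) q = Legendre 1 q" by (rule leg_cong)
    then show False using q leg_1[of q] by simp
  qed
  then have c1: "coprime n (int p)" using prime_imp_coprime[OF q(1)] qp by (simp add: coprime_commute)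
  have c2: "coprime (int p) (1 - 4*n)" using prime_imp_coprime[OF q(1) nd] qp by simp
  have c3: "\<not> QuadRes (int p) (1 - 4*n)" using q(3) qp by (auto simp: Legendre_def split: if_splits)
  have mem: "lpoly n \<in> S_set p n 1" unfolding S_set_def by blast
  have c0: "coprime (1::int) (int p)" by simp
  show ?thesis
    by (rule exI[of _ p], rule exI[of _ n], rule exI[of _ 1]) (use pp c0 c1 c2 c3 mem in simp)
qed

theorem mainTheorem4:
  fixes n :: int
  assumes "n \<noteq> 0"
  shows "(\<exists>(p::nat) (m::int) (l::int). prime p \<and> coprime m (int p) \<and> coprime l (int p) \<and>
            (odd p \<longrightarrow> coprime (int p) (1 - 4 * m) \<and> \<not> QuadRes (int p) (1 - 4 * m)) \<and>
            lpoly n \<in> S_set p m l)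
         \<longleftrightarrow> \<not> (\<exists>k::int. 1 - 4 * n = k ^ 2)"
proof
  assume "\<exists>(p::nat) (m::int) (l::int). prime p \<and> coprime m (int p) \<and> coprime l (int p) \<and>
            (odd p \<longrightarrow> coprime (int p) (1 - 4 * m) \<and> \<not> QuadRes (int p) (1 - 4 * m)) \<and>
            lpoly n \<in> S_set p m l"
  then obtain p m l where p: "prime (p::nat)" "coprime m (int p)"
    "odd p \<longrightarrow> coprime (int p) (1 - 4 * m) \<and> \<not> QuadRes (int p) (1 - 4 * m)"
    "lpoly n \<in> S_set p m l" by blast
  have nm: "[n = m] (mod int p)" using p(4) by (rule fwd_cong)
  show "\<not> (\<exists>k::int. 1 - 4 * n = k ^ 2)"
  proof
    assume "\<exists>k::int. 1 - 4 * n = k ^ 2"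
    then obtain k where k: "1 - 4 * n = k ^ 2" by blast
    show False
    proof (cases "odd p")
      case True
      then show False using fwd_odd[OF nm k] p(3) by blast
    next
      case False
      then have "2 dvd p" by simp
      then have p2: "p = 2" using primes_dvd_imp_eq[of 2 p] p(1) by simp
      have "odd m" using p(2) p2 by simp
      moreover have "[n = m] (mod 2)" using nm p2 by simp
      ultimately show False using fwd_two k by blast
    qed
  qed
next
  assume "\<not> (\<exists>k::int. 1 - 4 * n = k ^ 2)"
  then show "\<exists>(p::nat) (m::int) (l::int). prime p \<and> coprime m (int p) \<and> coprime l (int p) \<and>
            (odd p \<longrightarrow> coprime (int p) (1 - 4 * m) \<and> \<not> QuadRes (int p) (1 - 4 * m)) \<and>
            lpoly n \<in> S_set p m l" by (rule bwd)
qed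


end
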